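(* Let $\Lambda\in\mathbb{N}$, let $k\ge\Lambda^2(\Lambda+1)^2$, and let $\bm{\chi}=\sum_{m=-\Lambda}^{\Lambda}\cos\!\left(\frac{\pi m}{2\Lambda+2}\right)\psi_m\in\mathcal{H}_\Lambda$. Then $$(\Delta\bm{x})^2_{\bm{\chi}}<\frac{3.5}{(\Lambda+1)^2}.$$
   Context: (Fuzzy circle $S^1_\Lambda$.) $\mathcal{H}_\Lambda$ is a $(2\Lambda+1)$-dimensional Hilbert space with orthonormal basis $\{\psi_n\}_{n=-\Lambda}^{\Lambda}$. Operators: $x_+\psi_n=b_{n+1}\psi_{n+1}$, $x_-\psi_n=b_n\psi_{n-1}$, where $b_n=\sqrt{1+n(n-1)/k}$ if $1-\Lambda\le n\le\Lambda$ and $b_n=0$ otherwise; $x_1=(x_++x_-)/2$, $x_2=(x_+-x_-)/(2i)$, $\bm{x}^2=x_1^2+x_2^2$. For a nonzero vector $\bm{\chi}$, $\langle A\rangle_{\bm\chi}=\langle\bm{\chi},A\bm{\chi}\rangle/\langle\bm\chi,\bm\chi\rangle$ and $(\Delta\bm{x})^2_{\bm\chi}=\langle\bm{x}^2\rangle_{\bm\chi}-\langle x_1\rangle_{\bm\chi}^2-\langle x_2\rangle_{\bm\chi}^2$. *)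

theory Defs
  imports "HOL-Analysis.Analysis"
begin

text \<open>Vectors of H_Lambda are represented by their coefficient
 functions int => complex w.r.t. the basis psi_n, n in {-Lambda..Lambda};
 coefficients outside this range are ignored / set to zero.\<close>

type_synonym fvec = "int \<Rightarrow> complex"

definition fc_b :: "nat \<Rightarrow> real \<Rightarrow> int \<Rightarrow> real" where
  "fc_b L k n = (if 1 - int L \<le> n \<and> n \<le> int L
                 then sqrt (1 + real_of_int (n * (n - 1)) / k) else 0)"

definition fc_range :: "nat \<Rightarrow> int set" where
  "fc_range L = {- int L .. int L}"

definition fc_inner :: "nat \<Rightarrow> fvec \<Rightarrow> fvec \<Rightarrow> complex" where
  "fc_inner L u v = (\<Sum>n\<in>fc_range L. cnj (u n) * v n)"

text \<open>x_+ psi_n = b_(n+1) psi_(n+1): coefficient at n of x_+ v is b_n v_(n-1).\<close>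
definition fc_xplus :: "nat \<Rightarrow> real \<Rightarrow> fvec \<Rightarrow> fvec" where
  "fc_xplus L k v n = (if n \<in> fc_range L then complex_of_real (fc_b L k n) * v (n - 1) else 0)"

text \<open>x_- psi_n = b_n psi_(n-1): coefficient at n of x_- v is b_(n+1) v_(n+1).\<close>
definition fc_xminus :: "nat \<Rightarrow> real \<Rightarrow> fvec \<Rightarrow> fvec" where
  "fc_xminus L k v n = (if n \<in> fc_range L then complex_of_real (fc_b L k (n + 1)) * v (n + 1) else 0)"

definition fc_x1 :: "nat \<Rightarrow> real \<Rightarrow> fvec \<Rightarrow> fvec" where
  "fc_x1 L k v n = (fc_xplus L k v n + fc_xminus L k v n) / 2"

definition fc_x2 :: "nat \<Rightarrow> real \<Rightarrow> fvec \<Rightarrow> fvec" where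
  "fc_x2 L k v n = (fc_xplus L k v n - fc_xminus L k v n) / (2 * \<i>)"

definition fc_xsq :: "nat \<Rightarrow> real \<Rightarrow> fvec \<Rightarrow> fvec" where
  "fc_xsq L k v n = fc_x1 L k (fc_x1 L k v) n + fc_x2 L k (fc_x2 L k v) n"

definition fc_expect :: "nat \<Rightarrow> (fvec \<Rightarrow> fvec) \<Rightarrow> fvec \<Rightarrow> complex" where
  "fc_expect L A chi = fc_inner L chi (A chi) / fc_inner L chi chi"

text \<open>Expectations of self-adjoint operators are real; we take real parts.\<close>
definition fc_uncert :: "nat \<Rightarrow> real \<Rightarrow> fvec \<Rightarrow> real" where
  "fc_uncert L k chi = Re (fc_expect L (fc_xsq L k) chi)
      - (Re (fc_expect L (fc_x1 L k) chi))\<^sup>2 - (Re (fc_expect L (fc_x2 L k) chi))\<^sup>2"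

end

theory Submission
  imports Defs
begin
lemma sumA: "2 * sin x * (\<Sum>m\<in>{-int L..int L}. (cos (real_of_int m * x))^2) = (2*real L+1) * sin x + sin ((2*real L+1)*x)"
proof (induction L)
  case 0 then show ?case by simp
next
  case (Suc L)
  have sp: "{-int (Suc L)..int (Suc L)} = insert (-int (Suc L)) (insert (int (Suc L)) {-int L..int L})" by auto
  have e: "(\<Sum>m\<in>{-int (Suc L)..int (Suc L)}. (cos (real_of_int m * x))^2) = 2 * (cos ((real L + 1) * x))^2 + (\<Sum>m\<in>{-int L..int L}. (cos (real_of_int m * x))^2)"
    unfolding sp using cos_minus[of "x + x * real L"] by (simp add: algebra_simps)
  define a where "a = (real L + 1) * x"
  have c2: "(cos a)^2 = (1 + cos (2*a))/2" by (simp add: cos_double cos_squared_eq)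
  have s1: "sin ((2*real (Suc L)+1)*x) = sin (2*a + x)" by (simp add: a_def algebra_simps)
  have s2: "sin ((2*real L+1)*x) = sin (2*a - x)" by (simp add: a_def algebra_simps)
  show ?case unfolding e using Suc.IH s1 s2 c2 unfolding a_def[symmetric]
    by (simp add: sin_add sin_diff algebra_simps)
qed

lemma sumB: "2 * sin x * (\<Sum>n\<in>{1-int L..int L}. cos (real_of_int n * x) * cos (real_of_int (n-1) * x)) = 2*real L * sin x * cos x + sin (2*real L*x)"
proof (induction L)
  case 0 then show ?case by simp
next
  case (Suc L)
  have sp: "{1-int (Suc L)..int (Suc L)} = insert (-int L) (insert (int (Suc L)) {1-int L..int L})" by auto
  have e: "(\<Sum>n\<in>{1-int (Suc L)..int (Suc L)}. cos (real_of_int n * x) * cos (real_of_int (n-1) * x)) = 2 * cos (real L * x) * cos ((real L + 1) * x) + (\<Sum>n\<in>{1-int L..int L}. cos (real_of_int n * x) * cos (real_of_int (n-1) * x))"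
    unfolding sp using cos_minus[of "x + x * real L"] cos_minus[of "x * real L"] by (simp add: algebra_simps) (metis minus_diff_eq minus_real_def uminus_add_conv_diff add.commute)
  define a where "a = (2*real L + 1) * x"
  have p: "2 * cos (real L * x) * cos ((real L + 1) * x) = cos x + cos a"
    using cos_add[of "real L * x" "(real L + 1) * x"] cos_diff[of "(real L + 1) * x" "real L * x"]
    by (simp add: a_def algebra_simps)
  have s1: "sin (2*real (Suc L)*x) = sin (a + x)" by (simp add: a_def algebra_simps)
  have s2: "sin (2*real L*x) = sin (a - x)" by (simp add: a_def algebra_simps)
  show ?case unfolding e p using Suc.IH s1 s2
    by (simp add: sin_add sin_diff algebra_simps)
qed


theorem mainTheorem7:
  fixes L :: nat and k :: real and chi :: fvec
  assumes "k \<ge> real L ^ 2 * (real L + 1) ^ 2"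
    and "\<And>m. chi m = (if m \<in> fc_range L
                        then complex_of_real (cos (pi * real_of_int m / (2 * real L + 2))) else 0)"
  shows "fc_uncert L k chi < 3.5 / (real L + 1) ^ 2"
proof -
  define r where "r = fc_range L"
  define th where "th = pi / (2 * real L + 2)"
  define c where "c n = (if n \<in> r then cos (real_of_int n * th) else 0)" for n
  define B where "B = fc_b L k"
  have chi: "chi n = complex_of_real (c n)" for n using assms(2) by (simp add: c_def r_def th_def ac_simps)
  define P where "P n = (if n\<in>r then B n * c (n-1) else 0)" for n
  define M where "M n = (if n\<in>r then B (n+1) * c (n+1) else 0)" for n
  have xp: "fc_xplus L k chi n = of_real (P n)" for n
    by (simp add: fc_xplus_def P_def chi B_def r_def)
  have xm: "fc_xminus L k chi n = of_real (M n)" for n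
    by (simp add: fc_xminus_def M_def chi B_def r_def)
  have x1: "fc_x1 L k chi n = of_real ((P n + M n)/2)" for n by (simp add: fc_x1_def xp xm)
  have x2: "fc_x2 L k chi n = - \<i> * of_real ((P n - M n)/2)" for n
    by (simp add: fc_x2_def xp xm field_simps)
  have xsq: "fc_xsq L k chi n = of_real (if n \<in> r then (B n * M (n-1) + B (n+1) * P (n+1))/2 else 0)" for n
    unfolding fc_xsq_def fc_x1_def[of L k "fc_x1 L k chi" n] fc_x2_def[of L k "fc_x2 L k chi" n]
      fc_xplus_def fc_xminus_def x1 x2
    by (auto simp: B_def r_def field_simps)
  have fr: "finite r" by (simp add: r_def fc_range_def)
  define N where "N = (\<Sum>n\<in>r. (c n)^2)"
  define S where "S = (\<Sum>n\<in>r. c n * P n)"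
  define Q where "Q = (\<Sum>n\<in>r. c n * ((B n * M (n-1) + B (n+1) * P (n+1))/2))"
  have iN: "fc_inner L chi chi = of_real N"
    by (simp add: fc_inner_def N_def r_def chi power2_eq_square)
  have i1: "fc_inner L chi (fc_x1 L k chi) = of_real ((\<Sum>n\<in>r. c n * P n) + (\<Sum>n\<in>r. c n * M n))/2"
    by (simp add: fc_inner_def r_def chi x1 sum_divide_distrib[symmetric] sum.distrib[symmetric] algebra_simps)
  have i2: "fc_inner L chi (fc_x2 L k chi) = - \<i> * of_real ((\<Sum>n\<in>r. c n * (P n - M n)/2))"
    by (simp add: fc_inner_def r_def chi x2 sum_distrib_left mult.left_commute)
  have iq: "fc_inner L chi (fc_xsq L k chi) = of_real Q"
    by (simp add: fc_inner_def r_def chi xsq Q_def)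
  have e2: "Re (fc_expect L (fc_x2 L k) chi) = 0"
    unfolding fc_expect_def i2 iN by (simp add: Re_divide)
  have Lp: "2 * real L + 2 > 0" by simp
  have th0: "0 < th" by (simp add: th_def)
  have thle: "th \<le> pi/2" unfolding th_def using pi_gt_zero by (simp add: field_simps)
  have sth: "sin th > 0" using th0 thle pi_gt3 by (intro sin_gt_zero) auto
  have cth: "cos th \<ge> 0" using th0 thle by (intro cos_ge_zero) auto
  have thL: "(2 * real L + 2) * th = pi" unfolding th_def using Lp by simp
  have rI: "r = {-int L..int L}" by (simp add: r_def fc_range_def)
  have cpos: "c n \<ge> 0" for n
  proof (cases "n \<in> r")
    case True
    then have "\<bar>real_of_int n\<bar> \<le> real L" by (auto simp: rI)
    then have "\<bar>real_of_int n * th\<bar> \<le> real L * th" using th0 by (simp add: abs_mult)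
    also have "\<dots> \<le> pi/2" using thL th0 by (simp add: algebra_simps)
    finally show ?thesis using True by (auto simp: c_def intro!: cos_ge_zero)
  qed (simp add: c_def)
  have NN: "N = real L + 1"
  proof -
    have "N = (\<Sum>m\<in>{-int L..int L}. (cos (real_of_int m * th))^2)"
      unfolding N_def rI by (intro sum.cong) (auto simp: c_def rI)
    moreover have "sin ((2*real L+1)*th) = sin th"
    proof -
      have "(2*real L+1)*th = pi - th" using thL by (simp add: algebra_simps)
      then show ?thesis by simp
    qed
    ultimately have "2 * sin th * N = 2 * sin th * (real L + 1)" using sumA[of th L] by (simp add: algebra_simps)
    then show ?thesis using sth by simp
  qed
  define S0 where "S0 = (\<Sum>n\<in>r. c n * c (n-1))"
  have S0v: "S0 = (real L + 1) * cos th"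
  proof -
    have rr: "r = insert (-int L) {1-int L..int L}" by (auto simp: rI)
    have "S0 = (\<Sum>n\<in>{1-int L..int L}. cos (real_of_int n * th) * cos (real_of_int (n-1) * th))"
      unfolding S0_def rr by (subst sum.insert) (auto simp: c_def rI intro!: sum.cong)
    moreover have "sin (2*real L*th) = 2 * sin th * cos th"
    proof -
      have "2*real L*th = pi - 2 * th" using thL by (simp add: algebra_simps)
      then show ?thesis by (simp add: sin_double)
    qed
    ultimately have "2 * sin th * S0 = 2 * sin th * ((real L + 1) * cos th)" using sumB[of th L] by (simp add: algebra_simps)
    then show ?thesis using sth by simp
  qed
  define d where "d = 1 / (real L + 1)^2"
  have d0: "d \<ge> 0" by (simp add: d_def)
  have k0: "k \<ge> 0" using assms(1) by (metis mult_nonneg_nonneg of_nat_0_le_iff zero_le_power2 add_nonneg_nonneg zero_le_one order_trans)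
  have B0: "B n = 0" if "n \<notin> {1-int L..int L}" for n using that by (auto simp add: B_def fc_b_def)
  have B1: "1 \<le> B n \<and> (B n)^2 \<le> 1 + d" if n: "n \<in> {1-int L..int L}" for n
  proof -
    have L1: "L \<ge> 1" using n by auto
    have kp: "k > 0"
    proof -
      have "real L ^ 2 * (real L + 1) ^ 2 > 0" using L1 by simp
      then show ?thesis using assms(1) by linarith
    qed
    have t0: "n * (n-1) \<ge> 0"
    proof (cases "n \<ge> 1")
      case True then show ?thesis by simp
    next
      case False then have "n \<le> 0" by simp
      then show ?thesis by (simp add: mult_nonpos_nonpos)
    qed
    have t1: "n * (n-1) \<le> int L ^ 2"
    proof -
      have "(int L - n) * (int L + n - 1) \<ge> 0" using n by (intro mult_nonneg_nonneg) auto
      then have "n*(n-1) \<le> int L * (int L - 1)" by (simp add: algebra_simps)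
      also have "\<dots> \<le> int L ^ 2" by (simp add: power2_eq_square algebra_simps)
      finally show ?thesis .
    qed
    define t where "t = real_of_int (n * (n-1))"
    have tt0: "t \<ge> 0" unfolding t_def by (rule of_int_nonneg[OF t0])
    have tt1: "t \<le> real L ^ 2" using t1 unfolding t_def by (metis of_int_le_iff of_int_of_nat_eq of_int_power)
    have Bv: "B n = sqrt (1 + t / k)" using n by (simp add: B_def fc_b_def t_def)
    have q0: "t / k \<ge> 0" using tt0 kp by simp
    have "t / k \<le> real L ^ 2 / (real L ^ 2 * (real L + 1) ^ 2)"
    proof (rule frac_le)
      show "real L ^ 2 * (real L + 1) ^ 2 > 0" using L1 by simp
    qed (use tt1 assms(1) in auto)
    also have "\<dots> = d" using L1 by (simp add: d_def)
    finally have q1: "t / k \<le> d" .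
    show ?thesis using q0 q1 unfolding Bv by simp
  qed
  have cout: "c n = 0" if "n \<notin> r" for n using that by (simp add: c_def)
  have SS0: "S \<ge> S0" unfolding S_def S0_def
  proof (rule sum_mono)
    fix n assume nr: "n \<in> r"
    show "c n * c (n-1) \<le> c n * P n"
    proof (cases "n \<in> {1-int L..int L}")
      case True
      have "1 * (c n * c (n-1)) \<le> B n * (c n * c (n-1))"
        using B1[OF True] cpos[of n] cpos[of "n-1"] by (intro mult_right_mono) auto
      then show ?thesis using nr by (simp add: P_def algebra_simps)
    next
      case False
      then have "n - 1 \<notin> r" using nr by (auto simp: rI)
      then show ?thesis using nr False by (simp add: P_def cout B0)
    qed
  qed
  have SM: "(\<Sum>n\<in>r. c n * M n) = S"
  proof -
    define g where "g n = B n * c n * c (n-1)" for n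
    have gP: "c n * P n = g n" for n by (cases "n \<in> r") (auto simp: P_def g_def cout)
    have gM: "c n * M n = g (n+1)" for n by (cases "n \<in> r") (auto simp: M_def g_def cout)
    have g1: "g (-int L) = 0" by (simp add: g_def cout rI)
    have g2: "g (int L + 1) = 0" by (simp add: g_def cout rI)
    have "(\<Sum>n\<in>r. c n * M n) = (\<Sum>n\<in>{-int L..int L}. g (n+1))" by (simp add: gM rI)
    also have "\<dots> = (\<Sum>n\<in>(\<lambda>n. n+1) ` {-int L..int L}. g n)"
      by (subst sum.reindex) (auto simp: inj_on_def)
    also have "\<dots> = (\<Sum>n\<in>{1-int L..int L+1}. g n)" by simp
    also have "\<dots> = (\<Sum>n\<in>{-int L..int L+1}. g n)"
    proof -
      have "{-int L..int L+1} = insert (-int L) {1-int L..int L+1}" by auto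
      then show ?thesis using g1 by simp
    qed
    also have "\<dots> = (\<Sum>n\<in>{-int L..int L}. g n)"
    proof -
      have "{-int L..int L+1} = insert (int L + 1) {-int L..int L}" by auto
      then show ?thesis using g2 by simp
    qed
    finally show ?thesis by (simp add: S_def gP rI)
  qed
  have cL: "c (int L) = sin th" and cmL: "c (-int L) = sin th"
  proof -
    have "real L * th = pi/2 - th" using thL by (simp add: algebra_simps)
    then have "cos (real L * th) = sin th" by (simp add: cos_diff)
    then show "c (int L) = sin th" "c (-int L) = sin th" by (simp_all add: c_def rI)
  qed
  have QB: "Q \<le> (1 + d) * (N - (sin th)^2)"
  proof -
    define f where "f n = (1+d)/2 * (((c n)^2 - (if n = -int L then (c n)^2 else 0)) + ((c n)^2 - (if n = int L then (c n)^2 else 0)))" for n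
    have "Q \<le> (\<Sum>n\<in>r. f n)" unfolding Q_def
    proof (rule sum_mono)
      fix n assume nr: "n \<in> r"
      have a: "c n * (B n * M (n-1)) \<le> (1+d) * ((c n)^2 - (if n = -int L then (c n)^2 else 0))"
      proof (cases "n = -int L")
        case True
        then have "n \<notin> {1-int L..int L}" by auto
        then show ?thesis using True by (simp add: B0)
      next
        case False
        then have n1: "n \<in> {1-int L..int L}" "n - 1 \<in> r" using nr by (auto simp: rI)
        then have "c n * (B n * M (n-1)) = (B n)^2 * (c n)^2" by (simp add: M_def power2_eq_square)
        also have "\<dots> \<le> (1+d) * (c n)^2" using B1[OF n1(1)] by (intro mult_right_mono) auto
        finally show ?thesis using False by simp
      qed
      have b: "c n * (B (n+1) * P (n+1)) \<le> (1+d) * ((c n)^2 - (if n = int L then (c n)^2 else 0))"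
      proof (cases "n = int L")
        case True
        then have "n + 1 \<notin> {1-int L..int L}" by auto
        then show ?thesis using True by (simp add: B0)
      next
        case False
        then have n1: "n + 1 \<in> {1-int L..int L}" "n + 1 \<in> r" using nr by (auto simp: rI)
        then have "c n * (B (n+1) * P (n+1)) = (B (n+1))^2 * (c n)^2" by (simp add: P_def power2_eq_square)
        also have "\<dots> \<le> (1+d) * (c n)^2" using B1[OF n1(1)] by (intro mult_right_mono) auto
        finally show ?thesis using False by simp
      qed
      define A1 where "A1 = (c n)^2 - (if n = -int L then (c n)^2 else 0)"
      define A2 where "A2 = (c n)^2 - (if n = int L then (c n)^2 else 0)"
      have fn: "f n = ((1+d) * A1 + (1+d) * A2) / 2" unfolding f_def A1_def[symmetric] A2_def[symmetric]
        by (simp add: algebra_simps)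
      have e: "c n * ((B n * M (n - 1) + B (n + 1) * P (n + 1)) / 2) = (c n * (B n * M (n-1)) + c n * (B (n+1) * P (n+1)))/2"
        by (simp add: algebra_simps)
      show "c n * ((B n * M (n - 1) + B (n + 1) * P (n + 1)) / 2) \<le> f n"
        using divide_right_mono[OF add_mono[OF a b], of 2] unfolding fn e A1_def A2_def by simp
    qed
    also have "(\<Sum>n\<in>r. f n) = (1+d)/2 * ((N - (c (-int L))^2) + (N - (c (int L))^2))"
    proof -
      have s1: "(\<Sum>n\<in>r. (c n)^2 - (if n = a then (c n)^2 else 0)) = N - (c a)^2" if "a \<in> r" for a
        unfolding N_def using fr that by (simp add: sum_subtractf)
      have "(\<Sum>n\<in>r. f n) = (1+d)/2 * ((\<Sum>n\<in>r. (c n)^2 - (if n = -int L then (c n)^2 else 0)) + (\<Sum>n\<in>r. (c n)^2 - (if n = int L then (c n)^2 else 0)))"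
        unfolding f_def sum_distrib_left[symmetric] sum.distrib by simp
      also have "\<dots> = (1+d)/2 * ((N - (c (-int L))^2) + (N - (c (int L))^2))"
        using s1[of "-int L"] s1[of "int L"] by (simp add: rI)
      finally show ?thesis .
    qed
    also have "\<dots> = (1 + d) * (N - (sin th)^2)" using cL cmL by (simp add: field_simps)
    finally show ?thesis .
  qed
  define m where "m = real L + 1"
  have m0: "m > 0" by (simp add: m_def)
  have Nm: "N = m" using NN by (simp add: m_def)
  have U: "fc_uncert L k chi = Q/m - (S/m)^2"
  proof -
    have a: "Re (fc_expect L (fc_xsq L k) chi) = Q/m"
      unfolding fc_expect_def iq iN Nm by (simp add: of_real_divide[symmetric] del: of_real_divide)
    have b: "Re (fc_expect L (fc_x1 L k) chi) = S/m"
      unfolding fc_expect_def i1 iN Nm SM S_def[symmetric]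
      by (simp add: of_real_divide[symmetric] del: of_real_divide)
    show ?thesis unfolding fc_uncert_def a b e2 by simp
  qed
  have S0m: "S0 / m = cos th" using S0v m0 by (simp add: m_def)
  have c1: "cos th \<le> S / m" using SS0 m0 S0m by (metis divide_right_mono less_imp_le)
  have c2: "(cos th)^2 \<le> (S/m)^2" using c1 cth by (intro power_mono) auto
  have c3: "Q/m \<le> (1 + d) * (1 - (sin th)^2/m)"
  proof -
    have "Q/m \<le> (1 + d) * (m - (sin th)^2) / m" using QB m0 Nm by (simp add: divide_right_mono)
    also have "\<dots> = (1 + d) * (1 - (sin th)^2/m)" using m0 by (simp add: field_simps)
    finally show ?thesis .
  qed
  have c4: "(1 + d) * (1 - (sin th)^2/m) \<le> 1 + d - (sin th)^2/m"
  proof -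
    have "(sin th)^2/m \<ge> 0" using m0 by simp
    then have "d * ((sin th)^2/m) \<ge> 0" by (rule mult_nonneg_nonneg[OF d0])
    moreover have "(1 + d) * (1 - (sin th)^2/m) = 1 + d - (sin th)^2/m - d * ((sin th)^2/m)"
      by (simp add: algebra_simps add_divide_distrib)
    ultimately show ?thesis by linarith
  qed
  have c5: "(sin th)^2 \<le> th^2" using sin_x_le_x[of th] th0 sth by (intro power_mono) auto
  have c6: "1 - (sin th)^2/m - (cos th)^2 \<le> (sin th)^2"
  proof -
    have "(sin th)^2/m \<ge> 0" using m0 by simp
    then show ?thesis using sin_cos_squared_add[of th] by linarith
  qed
  have U2: "fc_uncert L k chi \<le> d + th^2" using U c2 c3 c4 c5 c6 by linarith
  have thmq: "th = pi / (2 * m)" by (simp add: th_def m_def algebra_simps)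
  have "d + th^2 = (1 + pi^2/4) / m^2" unfolding thmq d_def m_def[symmetric] using m0
    by (simp add: field_simps power2_eq_square)
  also have "\<dots> < 3.5 / m^2"
  proof -
    have "pi * pi < 3.15 * 3.15" by (rule mult_strict_mono) (use pi_approx(2) in auto)
    then have "pi^2 < 10" by (simp add: power2_eq_square)
    then have "1 + pi^2/4 < 3.5" by simp
    moreover have "m^2 > 0" using m0 by simp
    ultimately show ?thesis by (rule divide_strict_right_mono)
  qed
  finally show ?thesis using U2 by (simp add: m_def)
qed
end
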